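(* Let $n\ge 2$ and let $\pi\colon \Omega_n\to\mathbb{G}_n$ be the map sending a matrix in the spectral ball $\Omega_n=\{A\in\mathbb{C}^{n\times n}:\rho(A)<1\}$ to the vector $(\sigma_1,\dots,\sigma_n)$ of elementary symmetric polynomials of its eigenvalues. Then every fibre $\pi^{-1}(x)$, $x\in\mathbb{G}_n$, is $\mathbb{C}$-connected; the largest stratum of every fibre is $\mathbb{C}$-connected; and every connected component of every stratum of every fibre is $\mathbb{C}$-connected.
   Context: $\mathbb{G}_n=(\sigma_1,\dots,\sigma_n)(\mathbb{D}^n)$ is the symmetrized polydisc, $\rho$ the spectral radius. A fibre $\pi^{-1}(x)$ is the set of matrices in $\Omega_n$ with a prescribed characteristic polynomial; it decomposes into strata, which are the similarity classes (orbits of $\mathrm{SL}_n(\mathbb{C})$ acting by conjugation) contained in it; the largest stratum is the similarity class of cyclic matrices (one Jordan block per eigenvalue) in the fibre. A set $S$ is $\mathbb{C}$-connected if any two points of $S$ can be joined by a finite chain of images of holomorphic maps $\mathbb{C}\to S$, consecutive images intersecting. *)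

theory Defs
  imports "HOL-Analysis.Analysis" "Jordan_Normal_Form.Jordan_Normal_Form" "Jordan_Normal_Form.Spectral_Radius"
begin

definition spectral_ball :: "nat \<Rightarrow> complex mat set" where
  "spectral_ball n = {A \<in> carrier_mat n n. spectral_radius A < 1}"

text \<open>\<pi>(A) = (\<sigma>_1,...,\<sigma>_n) of the eigenvalues (with multiplicity);
  \<sigma>_k = (-1)^k times the coefficient of X^(n-k) in the monic characteristic polynomial.\<close>
definition sym_map :: "nat \<Rightarrow> complex mat \<Rightarrow> complex list" where
  "sym_map n A = map (\<lambda>k. (-1) ^ k * coeff (char_poly A) (n - k)) [1..<n+1]"

definition symmetrized_polydisc :: "nat \<Rightarrow> complex list set" where
  "symmetrized_polydisc n = sym_map n ` spectral_ball n"

definition fibre :: "nat \<Rightarrow> complex list \<Rightarrow> complex mat set" where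
  "fibre n x = {A \<in> spectral_ball n. sym_map n A = x}"

definition strata :: "nat \<Rightarrow> complex list \<Rightarrow> complex mat set set" where
  "strata n x = {S. \<exists>A \<in> fibre n x. S = {B \<in> carrier_mat n n. similar_mat B A}}"

text \<open>Cyclic matrix: exactly one Jordan block per eigenvalue.\<close>
definition cyclic_mat :: "complex mat \<Rightarrow> bool" where
  "cyclic_mat A = (\<exists>n_as. jordan_nf A n_as \<and> distinct (map snd n_as))"

definition largest_stratum :: "nat \<Rightarrow> complex list \<Rightarrow> complex mat set" where
  "largest_stratum n x = {A \<in> fibre n x. cyclic_mat A}"

definition entry_fun :: "nat \<Rightarrow> complex mat \<Rightarrow> (nat \<times> nat \<Rightarrow> complex)" where
  "entry_fun n A = (\<lambda>(i, j). if i < n \<and> j < n then A $$ (i, j) else 0)"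

definition mat_top :: "nat \<Rightarrow> complex mat topology" where
  "mat_top n = pullback_topology (carrier_mat n n) (entry_fun n) euclidean"

definition holo_mat_map :: "nat \<Rightarrow> (complex \<Rightarrow> complex mat) \<Rightarrow> bool" where
  "holo_mat_map n f = ((\<forall>z. f z \<in> carrier_mat n n) \<and>
     (\<forall>i<n. \<forall>j<n. (\<lambda>z. f z $$ (i, j)) holomorphic_on UNIV))"

definition C_connected :: "nat \<Rightarrow> complex mat set \<Rightarrow> bool" where
  "C_connected n S = (\<forall>a\<in>S. \<forall>b\<in>S. \<exists>fs :: (complex \<Rightarrow> complex mat) list.
      fs \<noteq> [] \<and> (\<forall>f\<in>set fs. holo_mat_map n f \<and> range f \<subseteq> S) \<and>
      a \<in> range (hd fs) \<and> b \<in> range (last fs) \<and>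
      (\<forall>i. Suc i < length fs \<longrightarrow> range (fs ! i) \<inter> range (fs ! Suc i) \<noteq> {}))"

end

theory Submission
  imports Defs
begin

definition chain_rel :: "nat \<Rightarrow> complex mat set \<Rightarrow> complex mat \<Rightarrow> complex mat \<Rightarrow> bool" where
  "chain_rel n S a b = (\<exists>fs :: (complex \<Rightarrow> complex mat) list.
      fs \<noteq> [] \<and> (\<forall>f\<in>set fs. holo_mat_map n f \<and> range f \<subseteq> S) \<and>
      a \<in> range (hd fs) \<and> b \<in> range (last fs) \<and>
      (\<forall>i. Suc i < length fs \<longrightarrow> range (fs ! i) \<inter> range (fs ! Suc i) \<noteq> {}))"

lemma C_connected_chain: "C_connected n S = (\<forall>a\<in>S. \<forall>b\<in>S. chain_rel n S a b)"
  unfolding C_connected_def chain_rel_def by simp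

lemma chain_single:
  assumes "holo_mat_map n f" "range f \<subseteq> S" "a \<in> range f" "b \<in> range f"
  shows "chain_rel n S a b"
  unfolding chain_rel_def using assms by (intro exI[of _ "[f]"]) auto

lemma chain_trans:
  assumes "chain_rel n S a b" "chain_rel n S b c"
  shows "chain_rel n S a c"
proof -
  obtain fs where fs: "fs \<noteq> []" "\<forall>f\<in>set fs. holo_mat_map n f \<and> range f \<subseteq> S"
    "a \<in> range (hd fs)" "b \<in> range (last fs)"
    "\<forall>i. Suc i < length fs \<longrightarrow> range (fs ! i) \<inter> range (fs ! Suc i) \<noteq> {}"
    using assms(1) unfolding chain_rel_def by blast
  obtain gs where gs: "gs \<noteq> []" "\<forall>f\<in>set gs. holo_mat_map n f \<and> range f \<subseteq> S"
    "b \<in> range (hd gs)" "c \<in> range (last gs)"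
    "\<forall>i. Suc i < length gs \<longrightarrow> range (gs ! i) \<inter> range (gs ! Suc i) \<noteq> {}"
    using assms(2) unfolding chain_rel_def by blast
  have idx: "range ((fs @ gs) ! i) \<inter> range ((fs @ gs) ! Suc i) \<noteq> {}"
    if i: "Suc i < length (fs @ gs)" for i
  proof -
    consider "Suc i < length fs" | "Suc i = length fs" | "Suc i > length fs" by linarith
    then show ?thesis
    proof cases
      case 1 then show ?thesis using fs(5) by (simp add: nth_append)
    next
      case 2
      have ii: "i = length fs - 1" using 2 by simp
      have "(fs @ gs) ! i = last fs" using fs(1) by (simp add: nth_append last_conv_nth ii)
      moreover have "(fs @ gs) ! Suc i = hd gs" using 2 gs(1) by (simp add: nth_append hd_conv_nth)
      ultimately show ?thesis using fs(4) gs(3) by auto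
    next
      case 3
      define j where "j = i - length fs"
      have j: "i = length fs + j" using 3 unfolding j_def by simp
      then have "Suc j < length gs" using i by simp
      then show ?thesis using gs(5) j by (simp add: nth_append)
    qed
  qed
  have all: "\<forall>f\<in>set (fs @ gs). holo_mat_map n f \<and> range f \<subseteq> S"
    unfolding set_append ball_Un using fs(2) gs(2) by simp
  show ?thesis unfolding chain_rel_def
    by (intro exI[of _ "fs @ gs"] conjI all allI impI idx) (use fs gs in auto)
qed

lemma chain_sym:
  assumes "chain_rel n S a b"
  shows "chain_rel n S b a"
proof -
  obtain fs where fs: "fs \<noteq> []" "\<forall>f\<in>set fs. holo_mat_map n f \<and> range f \<subseteq> S"
    "a \<in> range (hd fs)" "b \<in> range (last fs)"
    "\<forall>i. Suc i < length fs \<longrightarrow> range (fs ! i) \<inter> range (fs ! Suc i) \<noteq> {}"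
    using assms(1) unfolding chain_rel_def by blast
  have idx: "range (rev fs ! i) \<inter> range (rev fs ! Suc i) \<noteq> {}"
    if i: "Suc i < length (rev fs)" for i
  proof -
    define j where "j = length fs - Suc (Suc i)"
    have a: "rev fs ! i = fs ! Suc j" using i by (simp add: rev_nth j_def Suc_diff_Suc)
    have b: "rev fs ! Suc i = fs ! j" using i by (simp add: rev_nth j_def)
    have "Suc j < length fs" using i j_def by simp
    then have "range (fs ! j) \<inter> range (fs ! Suc j) \<noteq> {}" using fs(5) by simp
    then show ?thesis unfolding a b by (simp add: Int_commute)
  qed
  show ?thesis unfolding chain_rel_def
    by (intro exI[of _ "rev fs"]) (use fs idx in \<open>auto simp: hd_rev last_rev\<close>)
qed

lemma chain_refl:
  assumes "a \<in> S" "a \<in> carrier_mat n n"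
  shows "chain_rel n S a a"
  by (rule chain_single[of n "\<lambda>_. a"]) (use assms in \<open>auto simp: holo_mat_map_def\<close>)

lemma chain_mono: "chain_rel n S a b \<Longrightarrow> S \<subseteq> T \<Longrightarrow> chain_rel n T a b"
  unfolding chain_rel_def by blast

lemma chain_induct_rel:
  assumes ch: "chain_rel n S a b"
    and step: "\<And>f x y. holo_mat_map n f \<Longrightarrow> range f \<subseteq> S \<Longrightarrow> x \<in> range f \<Longrightarrow> y \<in> range f \<Longrightarrow> R x y"
    and tr: "\<And>x y z. R x y \<Longrightarrow> R y z \<Longrightarrow> R x z"
  shows "R a b"
proof -
  obtain fs where fs: "fs \<noteq> []" "\<forall>f\<in>set fs. holo_mat_map n f \<and> range f \<subseteq> S"
    "a \<in> range (hd fs)" "b \<in> range (last fs)"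
    "\<forall>i. Suc i < length fs \<longrightarrow> range (fs ! i) \<inter> range (fs ! Suc i) \<noteq> {}"
    using ch unfolding chain_rel_def by blast
  have "\<forall>a\<in>range (hd fs). \<forall>b\<in>range (last fs). R a b"
    using fs(1,2,5)
  proof (induction fs)
    case Nil then show ?case by simp
  next
    case (Cons f fs)
    show ?case
    proof (cases "fs = []")
      case True then show ?thesis using Cons.prems step by auto
    next
      case False
      have "range ((f#fs) ! 0) \<inter> range ((f#fs) ! Suc 0) \<noteq> {}"
        using Cons.prems(3)[rule_format, of 0] False by simp
      then obtain c where c: "c \<in> range f" "c \<in> range (hd fs)" using False by (auto simp: hd_conv_nth)
      have IH: "\<forall>a\<in>range (hd fs). \<forall>b\<in>range (last fs). R a b"
        apply (rule Cons.IH[OF False])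
        using Cons.prems(2) apply simp
        using Cons.prems(3) by (metis Suc_less_eq length_Cons nth_Cons_Suc)
      show ?thesis
      proof (intro ballI)
        fix x y assume x: "x \<in> range (hd (f#fs))" and y: "y \<in> range (last (f#fs))"
        have "R x c" using step[of f x c] Cons.prems(2) x c by auto
        moreover have "R c y" using IH c y False by auto
        ultimately show "R x y" by (rule tr)
      qed
    qed
  qed
  then show ?thesis using fs by auto
qed

lemma topspace_mat_top[simp]: "topspace (mat_top n) = carrier_mat n n"
  unfolding mat_top_def by (simp add: topspace_pullback_topology)

lemma holo_continuous_map:
  assumes "holo_mat_map n f"
  shows "continuous_map euclidean (mat_top n) f"
  unfolding mat_top_def
proof (rule continuous_map_pullback')
  show "topspace euclidean \<subseteq> f -` carrier_mat n n" using assms by (auto simp: holo_mat_map_def)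
  show "continuous_map euclidean euclidean (entry_fun n \<circ> f)"
    unfolding continuous_map_iff_continuous2
  proof (rule continuous_on_coordinatewise_then_product)
    fix ij :: "nat \<times> nat"
    obtain i j where ij: "ij = (i,j)" by force
    show "continuous_on UNIV (\<lambda>x. (entry_fun n \<circ> f) x ij)"
    proof (cases "i < n \<and> j < n")
      case True
      then have "(\<lambda>z. f z $$ (i, j)) holomorphic_on UNIV" using assms by (auto simp: holo_mat_map_def)
      then show ?thesis using True by (simp add: ij entry_fun_def holomorphic_on_imp_continuous_on)
    next
      case False
      then have eq: "(\<lambda>x. (entry_fun n \<circ> f) x ij) = (\<lambda>_. 0)" by (auto simp: ij entry_fun_def)
      show ?thesis unfolding eq by (rule continuous_on_const)
    qed
  qed
qed

lemma chain_ccof: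
  assumes "chain_rel n S a b" "S \<subseteq> carrier_mat n n"
  shows "connected_component_of (subtopology (mat_top n) S) a b"
proof (rule chain_induct_rel[OF assms(1)])
  fix f x y assume f: "holo_mat_map n f" "range f \<subseteq> S" "x \<in> range f" "y \<in> range f"
  have "continuous_map euclidean (subtopology (mat_top n) S) f"
    by (rule continuous_map_into_subtopology[OF holo_continuous_map[OF f(1)]]) (use f in auto)
  then have "connectedin (subtopology (mat_top n) S) (f ` UNIV)"
    by (rule connectedin_continuous_map_image) (simp add: connectedin_topspace connected_UNIV)
  then show "connected_component_of (subtopology (mat_top n) S) x y"
    unfolding connected_component_of_def using f by blast
qed (rule connected_component_of_trans)

lemma components_C_connected:
  assumes "C_connected n S" "S \<subseteq> carrier_mat n n"
  shows "\<forall>C \<in> connected_components_of (subtopology (mat_top n) S). C_connected n C"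
proof
  fix C assume C: "C \<in> connected_components_of (subtopology (mat_top n) S)"
  then obtain x where x: "x \<in> S" and Cx: "C = connected_component_of_set (subtopology (mat_top n) S) x"
    unfolding connected_components_of_def using assms(2) by auto
  have "C = S"
  proof
    show "C \<subseteq> S" unfolding Cx using connected_component_of_subset_topspace[of "subtopology (mat_top n) S" x]
      by auto
    show "S \<subseteq> C" unfolding Cx using chain_ccof assms x unfolding C_connected_chain by blast
  qed
  then show "C_connected n C" using assms by simp
qed

lemma holo_const: "A \<in> carrier_mat n n \<Longrightarrow> holo_mat_map n (\<lambda>_. A)"
  unfolding holo_mat_map_def by auto

lemma holo_mult:
  assumes F: "holo_mat_map n F" and G: "holo_mat_map n G"
  shows "holo_mat_map n (\<lambda>z. F z * G z)"
proof -
  have cF: "\<And>z. F z \<in> carrier_mat n n" and cG: "\<And>z. G z \<in> carrier_mat n n"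
    using F G by (auto simp: holo_mat_map_def)
  have e: "(F z * G z) $$ (i,j) = (\<Sum>k\<in>{0..<n}. F z $$ (i,k) * G z $$ (k,j))" if "i < n" "j < n" for z i j
    using cF[of z] cG[of z] that by (auto simp: scalar_prod_def)
  show ?thesis unfolding holo_mat_map_def
  proof (intro conjI allI impI)
    fix z show "F z * G z \<in> carrier_mat n n" using mult_carrier_mat[OF cF cG] .
  next
    fix i j assume ij: "i < n" "j < n"
    have "(\<lambda>z. \<Sum>k\<in>{0..<n}. F z $$ (i,k) * G z $$ (k,j)) holomorphic_on UNIV"
      by (intro holomorphic_on_sum holomorphic_on_mult) (use F G ij in \<open>auto simp: holo_mat_map_def\<close>)
    then show "(\<lambda>z. (F z * G z) $$ (i, j)) holomorphic_on UNIV"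
      using e[OF ij] by simp
  qed
qed

definition hinv :: "nat \<Rightarrow> (complex \<Rightarrow> complex mat) \<Rightarrow> (complex \<Rightarrow> complex mat) \<Rightarrow> bool" where
  "hinv n F G = (holo_mat_map n F \<and> holo_mat_map n G \<and> (\<forall>z. F z * G z = 1\<^sub>m n))"

inductive_set gd :: "nat \<Rightarrow> complex mat set" for n where
  one: "1\<^sub>m n \<in> gd n"
| step: "P \<in> carrier_mat n n \<Longrightarrow> P * F a \<in> gd n \<Longrightarrow> hinv n F G \<Longrightarrow> P * F b \<in> gd n"

definition orbit :: "nat \<Rightarrow> complex mat \<Rightarrow> complex mat set" where
  "orbit n B = {C \<in> carrier_mat n n. similar_mat C B}"

lemma orbitI:
  assumes "B \<in> carrier_mat n n" "M \<in> carrier_mat n n" "N \<in> carrier_mat n n" "M * N = 1\<^sub>m n"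
  shows "M * B * N \<in> orbit n B"
proof -
  have "N * M = 1\<^sub>m n" using mat_mult_left_right_inverse assms by blast
  then show ?thesis unfolding orbit_def using assms
    by (auto intro!: similar_matI[of _ _ M N n])
qed

lemma gd_carrier: "P \<in> gd n \<Longrightarrow> P \<in> carrier_mat n n"
  by (induction rule: gd.induct) (auto simp: hinv_def holo_mat_map_def)

lemma gd_chain:
  assumes "P \<in> gd n" "B \<in> carrier_mat n n"
  shows "\<exists>Q \<in> carrier_mat n n. P * Q = 1\<^sub>m n \<and> chain_rel n (orbit n B) B (P * B * Q)"
  using assms(1)
proof (induction rule: gd.induct)
  case one
  have "B \<in> orbit n B" unfolding orbit_def using assms(2) similar_mat_refl by blast
  then show ?case using assms(2) by (intro bexI[of _ "1\<^sub>m n"]) (auto intro: chain_refl)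
next
  case (step P F a G b)
  obtain Q1 where Q1: "Q1 \<in> carrier_mat n n" "P * F a * Q1 = 1\<^sub>m n"
    and ch: "chain_rel n (orbit n B) B (P * F a * B * Q1)" using step.IH by blast
  have hF: "holo_mat_map n F" and hG: "holo_mat_map n G" and FG: "\<And>z. F z * G z = 1\<^sub>m n"
    using step.hyps(3) by (auto simp: hinv_def)
  have cF: "\<And>z. F z \<in> carrier_mat n n" and cG: "\<And>z. G z \<in> carrier_mat n n"
    using hF hG by (auto simp: holo_mat_map_def)
  note P = step.hyps(1)
  define N where "N z = G z * F a * Q1" for z
  have cN: "N z \<in> carrier_mat n n" for z unfolding N_def
    by (rule mult_carrier_mat[OF mult_carrier_mat[OF cG cF] Q1(1)])
  have inv: "(P * F z) * N z = 1\<^sub>m n" for z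
  proof -
    have c1: "G z * F a \<in> carrier_mat n n" using mult_carrier_mat[OF cG cF] .
    have "F z * N z = F z * (G z * F a) * Q1"
      unfolding N_def by (rule assoc_mult_mat[symmetric, OF cF c1 Q1(1)])
    also have "F z * (G z * F a) = F z * G z * F a"
      by (rule assoc_mult_mat[symmetric, OF cF cG cF])
    also have "\<dots> = F a" using FG left_mult_one_mat[OF cF] by simp
    finally have e1: "F z * N z = F a * Q1" .
    have "(P * F z) * N z = P * (F z * N z)"
      by (rule assoc_mult_mat[OF P cF cN])
    also have "\<dots> = P * (F a * Q1)" by (simp add: e1)
    also have "\<dots> = P * F a * Q1" by (rule assoc_mult_mat[symmetric, OF P cF Q1(1)])
    finally show ?thesis using Q1 by simp
  qed
  have Na: "N a = Q1"
  proof -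
    have "G a * F a = 1\<^sub>m n" using mat_mult_left_right_inverse[OF cF cG FG] .
    then show ?thesis unfolding N_def using left_mult_one_mat[OF Q1(1)] by simp
  qed
  define h where "h z = P * F z * B * N z" for z
  have hh: "holo_mat_map n h"
    unfolding h_def N_def
    by (intro holo_mult holo_const hF hG) (use P assms(2) Q1 cF in auto)
  have hr: "range h \<subseteq> orbit n B"
    unfolding h_def using orbitI[OF assms(2) _ cN inv] P cF by auto
  have "chain_rel n (orbit n B) (P * F a * B * Q1) (P * F b * B * N b)"
  proof (rule chain_single[OF hh hr])
    have "h a = P * F a * B * Q1" by (simp add: h_def Na)
    then show "P * F a * B * Q1 \<in> range h" by (metis rangeI)
    show "P * F b * B * N b \<in> range h" unfolding h_def by (rule rangeI)
  qed
  with ch have "chain_rel n (orbit n B) B (P * F b * B * N b)" by (rule chain_trans)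
  then show ?case using inv cN by blast
qed

lemma if_app: "(if c then f else g) x = (if c then f x else g x)" by simp

lemma holo_if: "(c \<Longrightarrow> f holomorphic_on S) \<Longrightarrow> (\<not> c \<Longrightarrow> g holomorphic_on S) \<Longrightarrow>
  (\<lambda>z. if c then f z else g z) holomorphic_on S"
  by (cases c) auto

lemma mult5_assoc:
  assumes "P \<in> carrier_mat n n" "M \<in> carrier_mat n n" "A \<in> carrier_mat n n" "B \<in> carrier_mat n n" "C \<in> carrier_mat n n"
  shows "P * M * A * B * C = P * (M * (A * (B * C)))"
proof -
  have c1: "P * M \<in> carrier_mat n n" "P * M * A \<in> carrier_mat n n" "B * C \<in> carrier_mat n n"
    "A * (B * C) \<in> carrier_mat n n"
    using assms by (metis mult_carrier_mat)+
  have "P * M * A * B * C = P * M * A * (B * C)" by (rule assoc_mult_mat[OF c1(2) assms(4,5)])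
  also have "\<dots> = P * M * (A * (B * C))" by (rule assoc_mult_mat[OF c1(1) assms(3) c1(3)])
  also have "\<dots> = P * (M * (A * (B * C)))" by (rule assoc_mult_mat[OF assms(1,2) c1(4)])
  finally show ?thesis .
qed

lemma gd_step1:
  assumes "P \<in> gd n" "hinv n F G" "F a = 1\<^sub>m n"
  shows "P * F b \<in> gd n"
proof (rule gd.step[OF gd_carrier[OF assms(1)] _ assms(2)])
  show "P * F a \<in> gd n" using assms gd_carrier[OF assms(1)] by simp
qed

lemma gd_addrow:
  assumes P: "P \<in> gd n" and kl: "k < n" "l < n" "k \<noteq> l"
  shows "P * addrow_mat n c k l \<in> gd n"
proof -
  define F where "F z = addrow_mat n (z * c) k l" for z
  define G where "G z = addrow_mat n (- (z * c)) k l" for z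
  have hF: "holo_mat_map n (\<lambda>z. addrow_mat n (z * d) k l)" for d
    unfolding holo_mat_map_def addrow_mat_def
    by (auto simp: if_app intro!: holo_if holomorphic_intros)
  have "hinv n F G" unfolding hinv_def
  proof (intro conjI allI)
    show "holo_mat_map n F" unfolding F_def by (rule hF)
    show "holo_mat_map n G" unfolding G_def using hF[of "-c"] by simp
    fix z show "F z * G z = 1\<^sub>m n" unfolding F_def G_def by (rule addrow_mat_inv[OF kl])
  qed
  moreover have "F 0 = 1\<^sub>m n" unfolding F_def by (rule eq_matI) (auto simp: addrow_mat_def)
  ultimately have "P * F 1 \<in> gd n" by (rule gd_step1[OF P])
  then show ?thesis by (simp add: F_def)
qed

lemma gd_multrow:
  assumes P: "P \<in> gd n" and k: "k < n" and c: "c \<noteq> 0"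
  shows "P * multrow_mat n k c \<in> gd n"
proof -
  define F where "F z = multrow_mat n k (exp (z * Ln c))" for z
  define G where "G z = multrow_mat n k (exp (- (z * Ln c)))" for z
  have hF: "holo_mat_map n (\<lambda>z. multrow_mat n k (exp (z * d)))" for d
    unfolding holo_mat_map_def multrow_mat_def
    by (auto intro!: holo_if holomorphic_intros)
  have "hinv n F G" unfolding hinv_def
  proof (intro conjI allI)
    show "holo_mat_map n F" unfolding F_def by (rule hF)
    show "holo_mat_map n G" unfolding G_def using hF[of "- Ln c"] by simp
    fix z
    have "exp (- (z * Ln c)) = inverse (exp (z * Ln c))" by (simp add: exp_minus)
    then show "F z * G z = 1\<^sub>m n" unfolding F_def G_def
      using multrow_mat_inv[OF k, of "exp (z * Ln c)"] by simp
  qed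
  moreover have "F 0 = 1\<^sub>m n" unfolding F_def by (rule eq_matI) (auto simp: multrow_mat_def)
  ultimately have "P * F 1 \<in> gd n" by (rule gd_step1[OF P])
  then show ?thesis using c by (simp add: F_def)
qed

lemma swaprows_decomp:
  assumes kl: "k < n" "l < n" "k \<noteq> l"
  shows "swaprows_mat n k l = multrow_mat n l (-1) * (addrow_mat n 1 k l * (addrow_mat n (-1) l k
     * addrow_mat n (1::complex) k l))"
proof -
  let ?A1 = "addrow_mat n (1::complex) k l"
  have c: "?A1 \<in> carrier_mat n n" by simp
  have e1: "addrow_mat n (-1) l k * ?A1 = addrow (-1) l k ?A1"
    by (rule addrow_mat[symmetric, OF c kl(1)])
  have e2: "addrow_mat n 1 k l * addrow (-1) l k ?A1 = addrow 1 k l (addrow (-1) l k ?A1)"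
    by (rule addrow_mat[symmetric], use kl in auto)
  have e3: "multrow_mat n l (-1) * addrow 1 k l (addrow (-1) l k ?A1) = multrow l (-1) (addrow 1 k l (addrow (-1) l k ?A1))"
    by (rule multrow_mat[symmetric], auto)
  have e4: "multrow l (-1) (addrow 1 k l (addrow (-1) l k ?A1)) = swaprows_mat n k l"
    by (rule eq_matI) (use kl in \<open>auto simp: addrow_mat_def swaprows_mat_def\<close>)
  show ?thesis unfolding e1 e2 e3 e4 ..
qed

lemma gd_swaprows:
  assumes P: "P \<in> gd n" and kl: "k < n" "l < n"
  shows "P * swaprows_mat n k l \<in> gd n"
proof (cases "k = l")
  case True
  have "swaprows_mat n k l = (1\<^sub>m n :: complex mat)"
    by (rule eq_matI) (auto simp: swaprows_mat_def True)
  then show ?thesis using P gd_carrier[OF P] by simp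
next
  case False
  have cP: "P \<in> carrier_mat n n" by (rule gd_carrier[OF P])
  have "P * multrow_mat n l (-1) \<in> gd n" by (rule gd_multrow[OF P kl(2)]) simp
  then have "P * multrow_mat n l (-1) * addrow_mat n 1 k l \<in> gd n" by (rule gd_addrow[OF _ kl False])
  then have "P * multrow_mat n l (-1) * addrow_mat n 1 k l * addrow_mat n (-1) l k \<in> gd n"
    by (rule gd_addrow) (use kl False in auto)
  then have "P * multrow_mat n l (-1) * addrow_mat n 1 k l * addrow_mat n (-1) l k * addrow_mat n 1 k l \<in> gd n"
    by (rule gd_addrow[OF _ kl False])
  then show ?thesis unfolding swaprows_decomp[OF kl False]
    by (subst (asm) mult5_assoc[OF cP]) auto
qed

lemma gd_prod_eliminate_entries:
  assumes P: "P \<in> gd nr"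
  shows "i < nr \<Longrightarrow> (\<And> a i'. (a, i') \<in> set is \<Longrightarrow> i' < nr \<and> i' \<noteq> i)
  \<Longrightarrow> \<exists> P' \<in> gd nr. \<forall> B nc. B \<in> carrier_mat nr nc \<longrightarrow> P * eliminate_entries_rec B i is = P' * (B :: complex mat)"
proof (induct "is")
  case Nil
  then show ?case using P by (intro bexI[of _ P]) auto
next
  case (Cons ai' "is")
  obtain a i' where ai': "ai' = (a,i')" by force
  from Cons(1)[OF Cons(2-3)]
  obtain P' where P': "P' \<in> gd nr" and id: "\<And> B nc . B \<in> carrier_mat nr nc \<Longrightarrow>
    P * eliminate_entries_rec B i is = P' * B" by force
  let ?Add = "addrow_mat nr a i' i"
  have PI: "P' * ?Add \<in> gd nr"
    by (rule gd_addrow[OF P'], insert Cons ai', auto)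
  from gd_carrier[OF P'] have P'c: "P' \<in> carrier_mat nr nr" .
  show ?case
  proof (rule bexI[OF _ PI], intro allI impI)
    fix B :: "complex mat" and nc
    assume BB: "B \<in> carrier_mat nr nc"
    let ?B = "addrow a i' i B"
    from BB have B: "?B \<in> carrier_mat nr nc" by simp
    from id[OF B] have id: "P * eliminate_entries_rec ?B i is = P' * ?B" .
    have id2: "eliminate_entries_rec B i (ai' # is) = eliminate_entries_rec ?B i is" unfolding ai' by simp
    show "P * eliminate_entries_rec B i (ai' # is) = P' * ?Add * B"
      unfolding id2 id unfolding addrow_mat[OF BB Cons(2)]
      by (rule assoc_mult_mat[symmetric, OF P'c _ BB], auto)
  qed
qed

lemma gauss_jordan_transform_gd: assumes A: "A \<in> carrier_mat nr nc" and B: "B \<in> carrier_mat nr nc'"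
  and res: "gauss_jordan (A :: complex mat) B = (A',B')"
  shows "\<exists> P \<in> gd nr. A' = P * A \<and> B' = P * B"
proof -
  let ?U = "gd nr"
  {
    fix i j :: nat
    assume "gauss_jordan_main A B i j = (A',B')"
    with A B
    have "\<exists> P \<in> ?U. A' = P * A \<and> B' = P * B"
    proof (induction A B i j rule: gauss_jordan_main.induct)
      case (1 A B i j)
      note A = 1(5)
      hence dim: "dim_row A = nr" "dim_col A = nc" by auto
      note B = 1(6)
      hence dimB: "dim_row B = nr" "dim_col B = nc'" by auto
      note IH = 1(1-4)[OF dim[symmetric]]
      note res = 1(7)
      note simp = gauss_jordan_main.simps[of A B i j] Let_def
      let ?g = "gauss_jordan_main A B i j"
      show ?case 
      proof (cases "i < nr \<and> j < nc")
        case False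
        with res have res: "A' = A" "B' = B" unfolding simp dim by auto
        show ?thesis unfolding res
          by (rule bexI[of _ "1\<^sub>m nr"], insert A B, auto intro: gd.one)
      next
        case True note valid = this
        note IH = IH[OF valid refl]
        show ?thesis 
        proof (cases "A $$ (i,j) = 0")
          case False note nZ = this
          note IH = IH(3-4)[OF nZ]
          show ?thesis
          proof (cases "A $$ (i,j) = 1")
            case False note nO = this
            let ?inv = "inverse (A $$ (i,j))"
            from nO nZ valid res 
            have "gauss_jordan_main (multrow i ?inv A) (multrow i ?inv B) i j = (A',B')"
              unfolding simp dim by simp
            note IH = IH(2)[OF nO refl, unfolded multrow_carrier, OF A B this]
            from IH obtain P where P: "P \<in> ?U" and
              id: "A' = P * multrow i ?inv A" "B' = P * multrow i ?inv B" by blast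
            let ?Inv = "multrow_mat nr i ?inv"
            from nZ valid have "i < nr" "?inv \<noteq> 0" by auto
            then have PI: "P * ?Inv \<in> ?U" by (intro gd_multrow[OF P])
            from gd_carrier[OF P] have P: "P \<in> carrier_mat nr nr" .
            show ?thesis unfolding id unfolding multrow_mat[OF A] multrow_mat[OF B]
              by (rule bexI[OF _ PI], intro conjI, 
                rule assoc_mult_mat[symmetric, OF P _ A], simp, 
                rule assoc_mult_mat[symmetric, OF P _ B], simp)
          next
            case True note O = this
            let ?is = "filter (\<lambda> i'. i' \<noteq> i) [0 ..< nr]" 
            let ?ais = "map (\<lambda> i'. (-A $$ (i',j), i')) ?is" 
            let ?E = "\<lambda> B. eliminate_entries (\<lambda> i. A $$ (i,j)) B i j"
            let ?EE = "\<lambda> B. eliminate_entries_rec B i ?ais"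
            let ?A = "?E A"
            let ?B = "?E B"
            let ?AA = "?EE A"
            let ?BB = "?EE B"
            from O nZ valid res have "gauss_jordan_main ?A ?B (Suc i) (Suc j) = (A',B')"
              unfolding simp dim by simp
            note IH = IH(1)[OF O refl carrier_eliminate_entries(1)[OF A] carrier_eliminate_entries(1)[OF B] this]
            from IH obtain P where P: "P \<in> ?U" and id: "A' = P * ?A" "B' = P * ?B" by blast
            have *: "j < dim_col A" "i < dim_row A" by (auto simp add: dim valid)
            have "\<exists>P'\<in>?U. \<forall> B nc. B \<in> carrier_mat nr nc \<longrightarrow> P * ?EE B = P' * B"
              by (rule gd_prod_eliminate_entries[OF P], insert valid, auto)
            then obtain Q where Q: "Q \<in> ?U" and QQ: "\<And> B nc. B \<in> carrier_mat nr nc \<Longrightarrow> P * ?EE B = Q * B" by auto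
            {
              fix B :: "complex mat" and nc
              assume B: "B \<in> carrier_mat nr nc" 
              with dim have "dim_row B = dim_row A" by auto
              from eliminate_entries_convert[OF * this]
              have "?E B = ?EE B" using dim by simp
              then have "P * ?E B = Q * B" using QQ[OF B] by simp
            } note QQ = this              
            have id3: "P * ?A = Q * A" by (rule QQ[OF A])
            have id4: "P * ?B = Q * B" by (rule QQ[OF B])
            show ?thesis unfolding id id3 id4 using Q by blast
          qed
        next
          case True note Z = this
          note IH = IH(1-2)[OF Z]
          let ?is = "[ i' . i' <- [Suc i ..< nr],  A $$ (i',j) \<noteq> 0]"
          show ?thesis
          proof (cases ?is)
            case Nil 
            from Z valid res have id: "gauss_jordan_main A B i (Suc j) = (A',B')" unfolding simp dim Nil by simp
            from IH(1)[OF Nil A B this] show ?thesis unfolding id .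
          next
            case (Cons i' iis)
            from Z valid res have "gauss_jordan_main (swaprows i i' A) (swaprows i i' B) i j = (A',B')" 
              unfolding simp dim Cons by simp
            from IH(2)[OF Cons, unfolded swaprows_carrier, OF A B this]
            obtain P where P: "P \<in> ?U" and
              id: "A' = P * swaprows i i' A" "B' = P * swaprows i i' B" by blast
            let ?Swap = "swaprows_mat nr i i'"
            from Cons have "i' \<in> set ?is" by auto
            with valid have i': "i < nr" "i' < nr" by auto
            then have PI: "P * ?Swap \<in> ?U" by (intro gd_swaprows[OF P])
            from gd_carrier[OF P] have P: "P \<in> carrier_mat nr nr" .
            show ?thesis unfolding id swaprows_mat[OF A i'] swaprows_mat[OF B i']
              by (rule bexI[OF _ PI], rule conjI, 
              rule assoc_mult_mat[symmetric, OF P _ A], simp,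
              rule assoc_mult_mat[symmetric, OF P _ B], simp)
          qed
        qed
      qed
    qed
  }
  from this[of 0 0, folded gauss_jordan_def, OF res] show ?thesis .
qed


lemma invertible_gd:
  assumes P: "P \<in> carrier_mat n n" and Q: "Q \<in> carrier_mat n n" and PQ: "P * Q = 1\<^sub>m n"
  shows "(P :: complex mat) \<in> gd n"
proof -
  have QP: "Q * P = 1\<^sub>m n" by (rule mat_mult_left_right_inverse[OF P Q PQ])
  have QU: "Q \<in> Units (ring_mat TYPE(complex) n undefined)"
    using P Q PQ QP unfolding Units_def ring_mat_def by auto
  obtain A' B' where res: "gauss_jordan Q (1\<^sub>m n) = (A', B')" by force
  have A': "A' = 1\<^sub>m n" using gauss_jordan_inverse_other_direction[OF QU, of "1\<^sub>m n" n] res by simp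
  from gauss_jordan_transform_gd[OF Q one_carrier_mat res] obtain P' where P': "P' \<in> gd n"
    and e: "A' = P' * Q" by auto
  have P'c: "P' \<in> carrier_mat n n" by (rule gd_carrier[OF P'])
  have "P' = P' * (Q * P)" using QP P'c by simp
  also have "\<dots> = (P' * Q) * P" by (rule assoc_mult_mat[symmetric, OF P'c Q P])
  also have "P' * Q = 1\<^sub>m n" using e A' by simp
  also have "1\<^sub>m n * P = P" using P by simp
  finally show ?thesis using P' by simp
qed

lemma orbit_C_connected:
  assumes B: "B \<in> carrier_mat n n"
  shows "C_connected n (orbit n B)"
proof -
  have main: "chain_rel n (orbit n B) B C" if C: "C \<in> orbit n B" for C
  proof -
    from C have "similar_mat C B" "C \<in> carrier_mat n n" unfolding orbit_def by auto
    then obtain P Q where PQ: "P \<in> carrier_mat n n" "Q \<in> carrier_mat n n" "P * Q = 1\<^sub>m n"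
      "Q * P = 1\<^sub>m n" "C = P * B * Q"
      using B unfolding similar_mat_def similar_mat_wit_def Let_def by auto
    have "P \<in> gd n" by (rule invertible_gd[OF PQ(1,2,3)])
    from gd_chain[OF this B] obtain Q' where Q': "Q' \<in> carrier_mat n n" "P * Q' = 1\<^sub>m n"
      and ch: "chain_rel n (orbit n B) B (P * B * Q')" by blast
    have "Q' = (Q * P) * Q'" using PQ(4) Q' by simp
    also have "\<dots> = Q * (P * Q')" by (rule assoc_mult_mat[OF PQ(2,1) Q'(1)])
    also have "\<dots> = Q" using Q'(2) PQ(2) by simp
    finally show ?thesis using ch PQ(5) by simp
  qed
  show ?thesis unfolding C_connected_chain
    using main chain_sym chain_trans by metis
qed

lemma fb_swap:
  assumes A: "(A :: complex mat) \<in> carrier_mat k k" and B: "B \<in> carrier_mat m m"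
  shows "similar_mat (four_block_mat A (0\<^sub>m k m) (0\<^sub>m m k) B) (four_block_mat B (0\<^sub>m m k) (0\<^sub>m k m) A)"
proof -
  let ?X = "four_block_mat A (0\<^sub>m k m) (0\<^sub>m m k) B"
  let ?Y = "four_block_mat B (0\<^sub>m m k) (0\<^sub>m k m) A"
  let ?P = "four_block_mat (0\<^sub>m k m) (1\<^sub>m k) (1\<^sub>m m) (0\<^sub>m m k) :: complex mat"
  let ?Q = "four_block_mat (0\<^sub>m m k) (1\<^sub>m m) (1\<^sub>m k) (0\<^sub>m k m) :: complex mat"
  have km: "m + k = k + m" by simp
  have z1: "0\<^sub>m k m \<in> carrier_mat k m" "0\<^sub>m m k \<in> carrier_mat m k" by auto
  have o1: "1\<^sub>m k \<in> carrier_mat k k" "1\<^sub>m m \<in> carrier_mat m m" by auto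
  have PY: "?P * ?Y = four_block_mat (0\<^sub>m k m) A B (0\<^sub>m m k)"
    apply (subst mult_four_block_mat[OF z1(1) o1(1) o1(2) z1(2) B z1(2) z1(1) A])
    apply (rule cong_four_block_mat)
    using A B by (simp_all add: left_mult_zero_mat right_mult_zero_mat)
  have PYQ: "four_block_mat (0\<^sub>m k m) A B (0\<^sub>m m k) * ?Q = ?X"
    apply (subst mult_four_block_mat[OF z1(1) A B z1(2) z1(2) o1(2) o1(1) z1(1)])
    apply (rule cong_four_block_mat)
    using A B by (simp_all add: left_mult_zero_mat right_mult_zero_mat)
  have PQ: "?P * ?Q = 1\<^sub>m (k + m)"
    apply (subst mult_four_block_mat[OF z1(1) o1(1) o1(2) z1(2) z1(2) o1(2) o1(1) z1(1)])
    apply (subst four_block_one_mat[symmetric])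
    apply (rule cong_four_block_mat)
    by (simp_all add: left_mult_zero_mat right_mult_zero_mat)
  have QP0: "?Q * ?P = 1\<^sub>m (m + k)"
    apply (subst mult_four_block_mat[OF z1(2) o1(2) o1(1) z1(1) z1(1) o1(1) o1(2) z1(2)])
    apply (subst four_block_one_mat[symmetric])
    apply (rule cong_four_block_mat)
    by (simp_all add: left_mult_zero_mat right_mult_zero_mat)
  have QP: "?Q * ?P = 1\<^sub>m (k + m)" using QP0 unfolding km .
  have cX: "?X \<in> carrier_mat (k + m) (k + m)" using four_block_carrier_mat[OF A B] .
  have cY: "?Y \<in> carrier_mat (k + m) (k + m)" using four_block_carrier_mat[OF B A] unfolding km .
  have cP: "?P \<in> carrier_mat (k + m) (k + m)" using four_block_carrier_mat[OF z1(1) z1(2)] unfolding km .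
  have cQ: "?Q \<in> carrier_mat (k + m) (k + m)" using four_block_carrier_mat[OF z1(2) z1(1)] unfolding km .
  show ?thesis
  proof (rule similar_matI[of _ _ ?P ?Q "k + m"])
    show "{?X, ?Y, ?P, ?Q} \<subseteq> carrier_mat (k + m) (k + m)" using cX cY cP cQ by simp
    show "?P * ?Q = 1\<^sub>m (k + m)" by (rule PQ)
    show "?Q * ?P = 1\<^sub>m (k + m)" by (rule QP)
    show "?X = ?P * ?Y * ?Q" unfolding PY PYQ ..
  qed
qed

lemma fb_assoc:
  assumes A: "(A :: complex mat) \<in> carrier_mat a a" and B: "B \<in> carrier_mat b b" and C: "C \<in> carrier_mat c c"
  shows "four_block_mat A (0\<^sub>m a (b + c)) (0\<^sub>m (b + c) a) (four_block_mat B (0\<^sub>m b c) (0\<^sub>m c b) C)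
    = four_block_mat (four_block_mat A (0\<^sub>m a b) (0\<^sub>m b a) B) (0\<^sub>m (a + b) c) (0\<^sub>m c (a + b)) C"
  by (rule eq_matI) (use A B C in auto)

lemma jm_carrier: "jordan_matrix L \<in> carrier_mat (sum_list (map fst L)) (sum_list (map fst L))"
  by simp

lemma jm_cons_sim:
  assumes sim: "similar_mat (jordan_matrix L1) (jordan_matrix (L2 :: (nat \<times> complex) list))"
    and s: "sum_list (map fst L1) = sum_list (map fst L2)"
  shows "similar_mat (jordan_matrix (x # L1)) (jordan_matrix (x # L2))"
proof -
  obtain nx ax where x: "x = (nx, ax)" by force
  show ?thesis unfolding x jordan_matrix_Cons s
    by (rule similar_mat_four_block_0_0[OF similar_mat_refl[OF jordan_block_carrier] sim
      jordan_block_carrier]) (metis jm_carrier s)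
qed

lemma jm_swap2:
  "similar_mat (jordan_matrix (x # y # (R :: (nat \<times> complex) list))) (jordan_matrix (y # x # R))"
proof -
  obtain nx ax where x: "x = (nx, ax)" by force
  obtain ny ay where y: "y = (ny, ay)" by force
  let ?s = "sum_list (map fst R)"
  have e1: "jordan_matrix (x # y # R) = four_block_mat (four_block_mat (jordan_block nx ax) (0\<^sub>m nx ny)
     (0\<^sub>m ny nx) (jordan_block ny ay)) (0\<^sub>m (nx + ny) ?s) (0\<^sub>m ?s (nx + ny)) (jordan_matrix R)"
    unfolding x y jordan_matrix_Cons by (simp add: fb_assoc[OF jordan_block_carrier jordan_block_carrier jm_carrier])
  have e2: "jordan_matrix (y # x # R) = four_block_mat (four_block_mat (jordan_block ny ay) (0\<^sub>m ny nx)
     (0\<^sub>m nx ny) (jordan_block nx ax)) (0\<^sub>m (nx + ny) ?s) (0\<^sub>m ?s (nx + ny)) (jordan_matrix R)"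
    unfolding x y jordan_matrix_Cons
    by (simp add: fb_assoc[OF jordan_block_carrier jordan_block_carrier jm_carrier] add.commute)
  show ?thesis unfolding e1 e2
    by (rule similar_mat_four_block_0_0[OF fb_swap[OF jordan_block_carrier jordan_block_carrier]
      similar_mat_refl[OF jm_carrier]]) auto
qed

lemma jm_swap_gen:
  "similar_mat (jordan_matrix (x # ys1 @ ys2)) (jordan_matrix (ys1 @ x # (ys2 :: (nat \<times> complex) list)))"
proof (induction ys1)
  case Nil
  then show ?case by (auto intro: similar_mat_refl[OF jm_carrier])
next
  case (Cons y ys1)
  have "similar_mat (jordan_matrix (x # y # (ys1 @ ys2))) (jordan_matrix (y # x # (ys1 @ ys2)))"
    by (rule jm_swap2)
  moreover have "similar_mat (jordan_matrix (y # x # (ys1 @ ys2))) (jordan_matrix (y # ys1 @ x # ys2))"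
    by (rule jm_cons_sim[OF Cons.IH]) simp
  ultimately show ?case by (auto intro: similar_mat_trans)
qed

lemma jm_perm:
  "mset L1 = mset L2 \<Longrightarrow> similar_mat (jordan_matrix L1) (jordan_matrix (L2 :: (nat \<times> complex) list))"
proof (induction L1 arbitrary: L2)
  case Nil
  then show ?case by (auto intro: similar_mat_refl[OF jm_carrier])
next
  case (Cons x L1)
  have "x \<in> set L2" using Cons.prems by (metis list.set_intros(1) set_mset_mset)
  then obtain ys1 ys2 where L2: "L2 = ys1 @ x # ys2" by (meson split_list)
  have m: "mset L1 = mset (ys1 @ ys2)" using Cons.prems L2 by simp
  have s: "sum_list (map fst L1) = sum_list (map fst (ys1 @ ys2))"
    by (metis m mset_map sum_mset_sum_list)
  have "similar_mat (jordan_matrix (x # L1)) (jordan_matrix (x # ys1 @ ys2))"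
    by (rule jm_cons_sim[OF Cons.IH[OF m] s])
  moreover have "similar_mat (jordan_matrix (x # ys1 @ ys2)) (jordan_matrix L2)"
    unfolding L2 by (rule jm_swap_gen)
  ultimately show ?case by (rule similar_mat_trans)
qed

definition blockpoly :: "(nat \<times> complex) list \<Rightarrow> complex poly" where
  "blockpoly L = (\<Prod>(k, a)\<leftarrow>L. [:- a, 1:] ^ k)"

lemma blockpoly_Cons: "blockpoly ((k,a) # L) = [:- a, 1:] ^ k * blockpoly L"
  by (simp add: blockpoly_def)

lemma poly_blockpoly_nz: "e \<notin> snd ` set L \<Longrightarrow> poly (blockpoly L) e \<noteq> 0"
proof (induction L)
  case Nil then show ?case by (simp add: blockpoly_def)
next
  case (Cons x L)
  obtain k a where x: "x = (k, a)" by force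
  have "e \<noteq> a" using Cons.prems x by auto
  then show ?case using Cons x by (auto simp: blockpoly_Cons)
qed

lemma blockpoly_nz: "blockpoly L \<noteq> 0"
proof (induction L)
  case Nil then show ?case by (simp add: blockpoly_def)
next
  case (Cons x L)
  obtain k a where x: "x = (k, a)" by force
  then show ?case using Cons by (auto simp: blockpoly_Cons)
qed

lemma order_blockpoly:
  "distinct (map snd L) \<Longrightarrow> (k, e) \<in> set L \<Longrightarrow> order e (blockpoly L) = k"
proof (induction L)
  case Nil then show ?case by simp
next
  case (Cons x L)
  obtain k' a where x: "x = (k', a)" by force
  have nz: "[:- a, 1:] ^ k' * blockpoly L \<noteq> 0" using blockpoly_nz[of L] by simp
  have o: "order e (blockpoly (x # L)) = order e ([:- a, 1:] ^ k') + order e (blockpoly L)"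
    unfolding x blockpoly_Cons by (rule order_mult[OF nz])
  show ?case
  proof (cases "(k, e) = x")
    case True
    then have ke: "k = k'" "e = a" using x by auto
    have "e \<notin> snd ` set L" using Cons.prems(1) x ke by auto
    then have "order e (blockpoly L) = 0" by (intro order_0I poly_blockpoly_nz)
    then show ?thesis using o ke order_power_n_n by simp
  next
    case False
    then have inL: "(k, e) \<in> set L" using Cons.prems(2) by auto
    then have "e \<noteq> a" using Cons.prems(1) x by (auto simp: image_iff)
    then have "order e ([:- a, 1:] ^ k') = 0" by (intro order_0I) simp
    then show ?thesis using o Cons.IH[OF _ inL] Cons.prems(1) by simp
  qed
qed

lemma blocks_subset:
  assumes d1: "distinct (map snd L1)" and d2: "distinct (map snd L2)"
    and z: "0 \<notin> fst ` set L1" and eq: "blockpoly L1 = blockpoly L2"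
  shows "set L1 \<subseteq> set L2"
proof
  fix ke assume ke: "ke \<in> set L1"
  obtain k e where kek: "ke = (k, e)" by force
  have k0: "k \<noteq> 0" using z ke kek by force
  have o1: "order e (blockpoly L1) = k" using order_blockpoly[OF d1] ke kek by simp
  have "e \<in> snd ` set L2"
  proof (rule ccontr)
    assume "e \<notin> snd ` set L2"
    then have "poly (blockpoly L1) e \<noteq> 0" using poly_blockpoly_nz eq by simp
    then have "order e (blockpoly L1) = 0" by (rule order_0I)
    then show False using o1 k0 by simp
  qed
  then obtain k' where k': "(k', e) \<in> set L2" by force
  have "order e (blockpoly L2) = k'" by (rule order_blockpoly[OF d2 k'])
  then have "k' = k" using o1 eq by simp
  then show "ke \<in> set L2" using k' kek by simp
qed

lemma cyclic_similar:
  assumes A: "jordan_nf A n_as" "distinct (map snd n_as)"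
    and B: "jordan_nf B m_as" "distinct (map snd m_as)"
    and cp: "char_poly A = char_poly (B :: complex mat)"
  shows "similar_mat A B"
proof -
  have e: "blockpoly n_as = blockpoly m_as"
    using jordan_nf_char_poly[OF A(1)] jordan_nf_char_poly[OF B(1)] cp by (simp add: blockpoly_def)
  have z1: "0 \<notin> fst ` set n_as" and z2: "0 \<notin> fst ` set m_as"
    using A(1) B(1) unfolding jordan_nf_def by auto
  have "set n_as = set m_as"
    using blocks_subset[OF A(2) B(2) z1 e] blocks_subset[OF B(2) A(2) z2 e[symmetric]] by auto
  moreover have "distinct n_as" "distinct m_as" using A(2) B(2) distinct_map by auto
  ultimately have "mset n_as = mset m_as" using set_eq_iff_mset_eq_distinct by blast
  then have "similar_mat (jordan_matrix n_as) (jordan_matrix m_as)" by (rule jm_perm)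
  moreover have "similar_mat A (jordan_matrix n_as)" "similar_mat B (jordan_matrix m_as)"
    using A(1) B(1) unfolding jordan_nf_def by auto
  ultimately show ?thesis by (meson similar_mat_sym similar_mat_trans)
qed

lemma fibre_carrier: "A \<in> fibre n x \<Longrightarrow> A \<in> carrier_mat n n"
  unfolding fibre_def spectral_ball_def by auto

lemma fibre_char:
  assumes A: "A \<in> fibre n x" and B: "B \<in> carrier_mat n n" and cp: "char_poly B = char_poly A"
  shows "B \<in> fibre n x"
proof -
  have Ac: "A \<in> carrier_mat n n" by (rule fibre_carrier[OF A])
  have "spectrum B = spectrum A"
    using spectrum_root_char_poly[OF Ac] spectrum_root_char_poly[OF B] cp by simp
  then have "spectral_radius B = spectral_radius A" unfolding spectral_radius_def by simp
  moreover have "sym_map n B = sym_map n A" unfolding sym_map_def cp ..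
  ultimately show ?thesis using A B unfolding fibre_def spectral_ball_def by auto
qed

lemma fibre_cp:
  assumes A: "A \<in> fibre n x" and B: "B \<in> fibre n x"
  shows "char_poly A = char_poly B"
proof -
  have Ac: "A \<in> carrier_mat n n" and Bc: "B \<in> carrier_mat n n"
    using A B fibre_carrier by auto
  have sm: "sym_map n A = sym_map n B" using A B unfolding fibre_def by auto
  have dA: "degree (char_poly A) = n" "coeff (char_poly A) n = 1"
    using degree_monic_char_poly[OF Ac] by auto
  have dB: "degree (char_poly B) = n" "coeff (char_poly B) n = 1"
    using degree_monic_char_poly[OF Bc] by auto
  show ?thesis
  proof (rule poly_eqI)
    fix j
    consider "j < n" | "j = n" | "j > n" by linarith
    then show "coeff (char_poly A) j = coeff (char_poly B) j"
    proof cases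
      case 1
      define k where "k = n - Suc j"
      have k: "k < n" "Suc k = n - j" "n - Suc k = j" using 1 unfolding k_def by auto
      have "sym_map n A ! k = (-1) ^ (Suc k) * coeff (char_poly A) j"
        unfolding sym_map_def using k by (simp add: nth_upt del: upt_Suc)
      moreover have "sym_map n B ! k = (-1) ^ (Suc k) * coeff (char_poly B) j"
        unfolding sym_map_def using k by (simp add: nth_upt del: upt_Suc)
      ultimately have "(-1) ^ (Suc k) * coeff (char_poly A) j = (-1) ^ (Suc k) * coeff (char_poly B) j"
        using sm by simp
      then show ?thesis by simp
    next
      case 2 then show ?thesis using dA dB by simp
    next
      case 3 then show ?thesis using dA dB by (simp add: coeff_eq_0)
    qed
  qed
qed

lemma orbit_sub_fibre:
  assumes A: "A \<in> fibre n x"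
  shows "orbit n A \<subseteq> fibre n x"
proof
  fix C assume "C \<in> orbit n A"
  then have C: "C \<in> carrier_mat n n" "similar_mat C A" unfolding orbit_def by auto
  show "C \<in> fibre n x" by (rule fibre_char[OF A C(1) char_poly_similar[OF C(2)]])
qed

lemma orbit_self: "A \<in> carrier_mat n n \<Longrightarrow> A \<in> orbit n A"
  unfolding orbit_def using similar_mat_refl by blast

lemma fibre_to_diag:
  assumes A: "A \<in> fibre n x" and es: "char_poly A = (\<Prod> e \<leftarrow> es. [:- e, 1:])"
  shows "chain_rel n (fibre n x) A (mat n n (\<lambda>(i,j). if i = j then es ! i else 0))"
proof -
  have Ac: "A \<in> carrier_mat n n" by (rule fibre_carrier[OF A])
  obtain T P Q where sd: "schur_decomposition A es = (T, P, Q)" by (cases "schur_decomposition A es") auto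
  from schur_decomposition[OF Ac es sd] have wit: "similar_mat_wit A T P Q"
    and ut: "upper_triangular T" and dT: "diag_mat T = es" by auto
  have Tc: "T \<in> carrier_mat n n" using wit Ac unfolding similar_mat_wit_def Let_def by auto
  have simTA: "similar_mat T A" using wit similar_mat_sym unfolding similar_mat_def by blast
  have "T \<in> orbit n A" using Tc simTA unfolding orbit_def by auto
  then have ch1: "chain_rel n (orbit n A) A T"
    using orbit_C_connected[OF Ac] orbit_self[OF Ac] unfolding C_connected_chain by blast
  then have ch1': "chain_rel n (fibre n x) A T" by (rule chain_mono[OF _ orbit_sub_fibre[OF A]])
  define L where "L z = mat n n (\<lambda>(i,j). if i = j then T $$ (i,j) else (1 - z) * T $$ (i,j))" for z
  have hL: "holo_mat_map n L"
    unfolding holo_mat_map_def L_def by (auto intro!: holo_if holomorphic_intros)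
  have Lc: "L z \<in> carrier_mat n n" for z unfolding L_def by simp
  have utL: "upper_triangular (L z)" for z
    using ut Tc unfolding upper_triangular_def L_def by auto
  have dL: "diag_mat (L z) = es" for z
    using dT Tc unfolding diag_mat_def L_def by auto
  have "char_poly (L z) = char_poly A" for z
    using char_poly_upper_triangular[OF Lc utL] dL es by simp
  then have rL: "range L \<subseteq> fibre n x" using fibre_char[OF A Lc] by auto
  have L0: "L 0 = T" unfolding L_def by (rule eq_matI) (use Tc in auto)
  have len: "length es = n" using dT Tc unfolding diag_mat_def by auto
  have L1: "L 1 = mat n n (\<lambda>(i,j). if i = j then es ! i else 0)"
    unfolding L_def by (rule eq_matI) (use Tc dT in \<open>auto simp: diag_mat_def\<close>)
  have "chain_rel n (fibre n x) T (mat n n (\<lambda>(i,j). if i = j then es ! i else 0))"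
  proof (rule chain_single[OF hL rL])
    show "T \<in> range L" using L0 by (metis rangeI)
    show "mat n n (\<lambda>(i,j). if i = j then es ! i else 0) \<in> range L" using L1 by (metis rangeI)
  qed
  with ch1' show ?thesis by (rule chain_trans)
qed

lemma fibre_C_connected: "C_connected n (fibre n x)"
  unfolding C_connected_chain
proof (intro ballI)
  fix a b assume a: "a \<in> fibre n x" and b: "b \<in> fibre n x"
  have ac: "a \<in> carrier_mat n n" by (rule fibre_carrier[OF a])
  obtain es where es: "char_poly a = (\<Prod> e \<leftarrow> es. [:- e, 1:])" using char_poly_factorized[OF ac] by blast
  have esb: "char_poly b = (\<Prod> e \<leftarrow> es. [:- e, 1:])" using es fibre_cp[OF a b] by simp
  have "chain_rel n (fibre n x) a (mat n n (\<lambda>(i,j). if i = j then es ! i else 0))"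
    by (rule fibre_to_diag[OF a es])
  moreover have "chain_rel n (fibre n x) b (mat n n (\<lambda>(i,j). if i = j then es ! i else 0))"
    by (rule fibre_to_diag[OF b esb])
  ultimately show "chain_rel n (fibre n x) a b" by (metis chain_sym chain_trans)
qed

lemma largest_C_connected: "C_connected n (largest_stratum n x)"
  unfolding C_connected_chain
proof (intro ballI)
  fix a b assume a: "a \<in> largest_stratum n x" and b: "b \<in> largest_stratum n x"
  have af: "a \<in> fibre n x" and bf: "b \<in> fibre n x" using a b unfolding largest_stratum_def by auto
  have ac: "a \<in> carrier_mat n n" and bc: "b \<in> carrier_mat n n" using af bf fibre_carrier by auto
  obtain n_as where na: "jordan_nf a n_as" "distinct (map snd n_as)"
    using a unfolding largest_stratum_def cyclic_mat_def by auto
  obtain m_as where ma: "jordan_nf b m_as" "distinct (map snd m_as)"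
    using b unfolding largest_stratum_def cyclic_mat_def by auto
  have "similar_mat b a" by (rule cyclic_similar[OF ma na fibre_cp[OF bf af]])
  then have bo: "b \<in> orbit n a" using bc unfolding orbit_def by auto
  have sub: "orbit n a \<subseteq> largest_stratum n x"
  proof
    fix C assume C: "C \<in> orbit n a"
    then have Cs: "similar_mat C a" unfolding orbit_def by auto
    have "C \<in> fibre n x" using C orbit_sub_fibre[OF af] by auto
    moreover have "jordan_nf C n_as"
      using na(1) Cs similar_mat_trans unfolding jordan_nf_def by blast
    ultimately show "C \<in> largest_stratum n x"
      using na(2) unfolding largest_stratum_def cyclic_mat_def by auto
  qed
  have "chain_rel n (orbit n a) a b"
    using orbit_C_connected[OF ac] orbit_self[OF ac] bo unfolding C_connected_chain by blast
  then show "chain_rel n (largest_stratum n x) a b" by (rule chain_mono[OF _ sub])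
qed

lemma strata_orbit: "S \<in> strata n x \<Longrightarrow> \<exists>A \<in> fibre n x. S = orbit n A"
  unfolding strata_def orbit_def by auto

theorem lemma1:
  fixes n :: nat
  assumes "n \<ge> 2"
  shows "\<forall>x \<in> symmetrized_polydisc n.
           C_connected n (fibre n x) \<and>
           C_connected n (largest_stratum n x) \<and>
           (\<forall>S \<in> strata n x. \<forall>C \<in> connected_components_of (subtopology (mat_top n) S).
              C_connected n C)"
proof (intro ballI conjI)
  fix x
  show "C_connected n (fibre n x)" by (rule fibre_C_connected)
  show "C_connected n (largest_stratum n x)" by (rule largest_C_connected)
  fix S C assume SS: "S \<in> strata n x" and CC: "C \<in> connected_components_of (subtopology (mat_top n) S)"
  obtain A where A: "A \<in> fibre n x" and S: "S = orbit n A" using strata_orbit[OF SS] by blast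
  have Ac: "A \<in> carrier_mat n n" by (rule fibre_carrier[OF A])
  have "orbit n A \<subseteq> carrier_mat n n" by (auto simp: orbit_def)
  from components_C_connected[OF orbit_C_connected[OF Ac] this] CC
  show "C_connected n C" unfolding S by blast
qed

end
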